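(* Let $\mathcal F$ be a left $\mathcal D$-module. Then the pairing $\langle\sum_{u\in M}A_ux^{-u},\sum_{u\in M}B_ux^u\rangle=\sum_uB_uA_u$ induces an isomorphism $\mathcal K(\mathcal F)\cong\mathrm{Hom}_{\mathcal D}(\mathcal W,\mathcal F)$.
   Context: Let $A=\{\mathbf a_1,\dots,\mathbf a_m\}\subseteq\mathbb Z^n$ be linearly independent over $\mathbb R$, $\mathbf a_0\in\mathbb Z^n$, and $\ell_0,\dots,\ell_m$ positive integers with gcd $1$, $\ell_0\mathbf a_0=\sum_{j=1}^m\ell_j\mathbf a_j$, $\ell_0=\sum_{j=1}^m\ell_j$. Write $\mathbf a_j=(a_{1j},\dots,a_{nj})$ for $j=0,\dots,m$. Let $f_\lambda=\sum_{j=1}^m\ell_jx^{\mathbf a_j}-\ell_0\lambda x^{\mathbf a_0}$. Let $V$ be the real span of $A$, $V_{\mathbb Z}=V\cap\mathbb Z^n$, $C(A)$ the real cone generated by $A$, $M=V_{\mathbb Z}\cap C(A)$. Let $S$ be the $\mathbb C[\lambda]$-span of $\{x^u:u\in M\}$, $D_i=x_i\partial/\partial x_i+x_i\partial f_\lambda/\partial x_i$ ($i=1,\dots,n$), $D_\lambda=\partial/\partial\lambda-\ell_0x^{\mathbf a_0}$, $\mathcal D=\mathbb C[\lambda]\langle\partial_\lambda\rangle$, and $\mathcal W=S/\sum_iD_iS$, a left $\mathcal D$-module with $\partial_\lambda$ acting as $D_\lambda$. For a left $\mathcal D$-module $\mathcal F$, let $R(\mathcal F)$ be the set of formal sums $\xi=\sum_{u\in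 M}A_ux^{-u}$ with $A_u\in\mathcal F$, and define $D_i^*(\xi)=\sum_{v\in M}\big(v_iA_v-\ell_0a_{i0}\lambda A_{v+\mathbf a_0}+\sum_{j=1}^m\ell_ja_{ij}A_{v+\mathbf a_j}\big)x^{-v}$ (this is $\gamma_-\circ(-x_i\partial/\partial x_i-\ell_0a_{i0}\lambda x^{\mathbf a_0}+\sum_j\ell_ja_{ij}x^{\mathbf a_j})$, where $\gamma_-$ discards monomials $x^{-u}$ with $u\notin M$). Let $\mathcal K(\mathcal F)$ be the set of $\xi=\sum_{u\in M}A_ux^{-u}\in R(\mathcal F)$ with $D_i^*(\xi)=0$ for $i=1,\dots,n$ and $\partial_\lambda(A_u)=-\ell_0A_{u+\mathbf a_0}$ for all $u\in M$. *)

theory Defs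
  imports "HOL-Analysis.Analysis" "HOL-Computational_Algebra.Polynomial"
begin

text \<open>Exponent vectors u in Z^n are elements of int^'n; the data are
  m, a :: nat => int^'n (a 0 = a_0, a 1, ..., a m = the elements of A) and
  l :: nat => nat (l 0 = ell_0, ..., l m = ell_m).  The coordinate a_{ij} is a j $ i.\<close>

definition rvec :: "int ^ 'n \<Rightarrow> real ^ 'n" where
  "rvec u = (\<chi> i. real_of_int (u $ i))"

definition VA :: "nat \<Rightarrow> (nat \<Rightarrow> int ^ 'n) \<Rightarrow> (real ^ 'n) set" where
  "VA m a = span ((\<lambda>j. rvec (a j)) ` {1..m})"

definition CA :: "nat \<Rightarrow> (nat \<Rightarrow> int ^ 'n) \<Rightarrow> (real ^ 'n) set" where
  "CA m a = {(\<Sum>j\<in>{1..m}. c j *\<^sub>R rvec (a j)) | c. \<forall>j\<in>{1..m}. 0 \<le> c j}"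

definition MA :: "nat \<Rightarrow> (nat \<Rightarrow> int ^ 'n) \<Rightarrow> (int ^ 'n) set" where
  "MA m a = {u. rvec u \<in> VA m a} \<inter> {u. rvec u \<in> CA m a}"

text \<open>S: an element sum_u s_u x^u is represented by its coefficient function
  s :: int^'n => complex poly, finitely supported with support in M.\<close>
definition SA :: "nat \<Rightarrow> (nat \<Rightarrow> int ^ 'n) \<Rightarrow> (int ^ 'n \<Rightarrow> complex poly) set" where
  "SA m a = {s. finite {u. s u \<noteq> 0} \<and> (\<forall>u. s u \<noteq> 0 \<longrightarrow> u \<in> MA m a)}"

definition lam :: "complex poly" where
  "lam = [:0, 1:]"

text \<open>D_i = x_i d/dx_i + x_i df_lambda/dx_i acting on S (coefficient of x^v of D_i(s))\<close>
definition Dop :: "nat \<Rightarrow> (nat \<Rightarrow> int ^ 'n) \<Rightarrow> (nat \<Rightarrow> nat) \<Rightarrow> 'n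
    \<Rightarrow> (int ^ 'n \<Rightarrow> complex poly) \<Rightarrow> (int ^ 'n \<Rightarrow> complex poly)" where
  "Dop m a l i s = (\<lambda>v. of_int (v $ i) * s v
      + (\<Sum>j\<in>{1..m}. of_int (int (l j) * (a j $ i)) * s (v - a j))
      - of_int (int (l 0) * (a 0 $ i)) * lam * s (v - a 0))"

text \<open>D_lambda = d/d lambda - ell_0 x^{a_0} acting on S\<close>
definition Dlam :: "(nat \<Rightarrow> int ^ 'n) \<Rightarrow> (nat \<Rightarrow> nat)
    \<Rightarrow> (int ^ 'n \<Rightarrow> complex poly) \<Rightarrow> (int ^ 'n \<Rightarrow> complex poly)" where
  "Dlam a l s = (\<lambda>v. pderiv (s v) - of_nat (l 0) * s (v - a 0))"

text \<open>A left D-module, D = C[lambda]<d_lambda>: a C[lambda]-module (action act)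
  with an additive operator P (action of d_lambda) satisfying
  d_lambda g = g d_lambda + g'.\<close>
definition left_D_module :: "(complex poly \<Rightarrow> 'f::ab_group_add \<Rightarrow> 'f) \<Rightarrow> ('f \<Rightarrow> 'f) \<Rightarrow> bool" where
  "left_D_module act P \<longleftrightarrow> module act \<and> (\<forall>x y. P (x + y) = P x + P y)
     \<and> (\<forall>g x. P (act g x) = act (pderiv g) x + act g (P x))"

text \<open>Elements of R(F): xi = sum_{u in M} A_u x^{-u}, represented by u |-> A_u (zero off M).
  D_i^*(xi), coefficient of x^{-v} for v in M:\<close>
definition Dstar :: "nat \<Rightarrow> (nat \<Rightarrow> int ^ 'n) \<Rightarrow> (nat \<Rightarrow> nat)
    \<Rightarrow> (complex poly \<Rightarrow> 'f::ab_group_add \<Rightarrow> 'f) \<Rightarrow> 'n \<Rightarrow> (int ^ 'n \<Rightarrow> 'f) \<Rightarrow> int ^ 'n \<Rightarrow> 'f" where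
  "Dstar m a l act i xi v = act (of_int (v $ i)) (xi v)
      - act (of_int (int (l 0) * (a 0 $ i)) * lam) (xi (v + a 0))
      + (\<Sum>j\<in>{1..m}. act (of_int (int (l j) * (a j $ i))) (xi (v + a j)))"

definition KF :: "nat \<Rightarrow> (nat \<Rightarrow> int ^ 'n) \<Rightarrow> (nat \<Rightarrow> nat)
    \<Rightarrow> (complex poly \<Rightarrow> 'f::ab_group_add \<Rightarrow> 'f) \<Rightarrow> ('f \<Rightarrow> 'f) \<Rightarrow> (int ^ 'n \<Rightarrow> 'f) set" where
  "KF m a l act P = {xi. (\<forall>u. u \<notin> MA m a \<longrightarrow> xi u = 0)
      \<and> (\<forall>i. \<forall>v\<in>MA m a. Dstar m a l act i xi v = 0)
      \<and> (\<forall>u\<in>MA m a. P (xi u) = - act (of_nat (l 0)) (xi (u + a 0)))}"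

definition pairing :: "(complex poly \<Rightarrow> 'f::ab_group_add \<Rightarrow> 'f)
    \<Rightarrow> (int ^ 'n \<Rightarrow> 'f) \<Rightarrow> (int ^ 'n \<Rightarrow> complex poly) \<Rightarrow> 'f" where
  "pairing act xi s = (\<Sum>u\<in>{u. s u \<noteq> 0}. act (s u) (xi u))"

text \<open>Hom_D(W, F) with W = S / sum_i D_i S: a D-linear map W -> F is the same as a
  map phi on S that is additive, C[lambda]-linear, intertwines D_lambda with d_lambda,
  and vanishes on sum_i D_i S.\<close>
definition HomDW :: "nat \<Rightarrow> (nat \<Rightarrow> int ^ 'n) \<Rightarrow> (nat \<Rightarrow> nat)
    \<Rightarrow> (complex poly \<Rightarrow> 'f::ab_group_add \<Rightarrow> 'f) \<Rightarrow> ('f \<Rightarrow> 'f)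
    \<Rightarrow> ((int ^ 'n \<Rightarrow> complex poly) \<Rightarrow> 'f) \<Rightarrow> bool" where
  "HomDW m a l act P phi \<longleftrightarrow>
      (\<forall>s\<in>SA m a. \<forall>t\<in>SA m a. phi (\<lambda>v. s v + t v) = phi s + phi t)
    \<and> (\<forall>g. \<forall>s\<in>SA m a. phi (\<lambda>v. g * s v) = act g (phi s))
    \<and> (\<forall>s\<in>SA m a. phi (Dlam a l s) = P (phi s))
    \<and> (\<forall>i. \<forall>s\<in>SA m a. phi (Dop m a l i s) = 0)"

end

theory Submission
  imports Defs
begin

definition dlt :: "'k \<Rightarrow> 'k \<Rightarrow> complex poly" where
  "dlt u = (\<lambda>v. if v = u then 1 else 0)"

lemma rvec_add: "rvec (u + v) = rvec u + rvec v"
  by (simp add: rvec_def vec_eq_iff)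

lemma CA_VA: "x \<in> CA m a \<Longrightarrow> x \<in> VA m a"
  unfolding CA_def VA_def
  apply clarify apply (rule span_sum) apply (rule span_scale) apply (rule span_base) by auto

lemma CA_add: "x \<in> CA m a \<Longrightarrow> y \<in> CA m a \<Longrightarrow> x + y \<in> CA m a"
proof -
  assume "x \<in> CA m a" "y \<in> CA m a"
  then obtain c d where c: "x = (\<Sum>j\<in>{1..m}. c j *\<^sub>R rvec (a j))" "\<forall>j\<in>{1..m}. 0 \<le> c j"
    and d: "y = (\<Sum>j\<in>{1..m}. d j *\<^sub>R rvec (a j))" "\<forall>j\<in>{1..m}. 0 \<le> d j"
    unfolding CA_def by auto
  have "x + y = (\<Sum>j\<in>{1..m}. (c j + d j) *\<^sub>R rvec (a j))"
    using c d by (simp add: sum.distrib scaleR_add_left)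
  moreover have "\<forall>j\<in>{1..m}. 0 \<le> c j + d j" using c d by auto
  ultimately show ?thesis unfolding CA_def
    by (intro CollectI exI[of _ "\<lambda>j. c j + d j"]) auto
qed

lemma MA_iff: "u \<in> MA m a \<longleftrightarrow> rvec u \<in> CA m a"
  unfolding MA_def using CA_VA by blast

lemma MA_add: "u \<in> MA m a \<Longrightarrow> v \<in> MA m a \<Longrightarrow> u + v \<in> MA m a"
  by (simp add: MA_iff rvec_add CA_add)

lemma aj_MA: "j \<in> {1..m} \<Longrightarrow> a j \<in> MA m a"
proof -
  assume j: "j \<in> {1..m}"
  have "(\<Sum>k\<in>{1..m}. (if k = j then 1 else 0) *\<^sub>R rvec (a k)) = (\<Sum>k\<in>{1..m}. if k = j then rvec (a k) else 0)"
    by (rule sum.cong) auto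
  also have "\<dots> = rvec (a j)" using j by (simp add: sum.delta)
  finally have e: "rvec (a j) = (\<Sum>k\<in>{1..m}. (if k = j then 1 else 0) *\<^sub>R rvec (a k))" by simp
  show ?thesis unfolding MA_iff CA_def
    by (intro CollectI exI[of _ "\<lambda>k. if k = j then 1 else (0::real)"] conjI e) auto
qed

lemma a0_MA:
  assumes lpos: "\<forall>j\<in>{0..m}. 0 < l j"
    and rel: "\<forall>i. int (l 0) * (a 0 $ i) = (\<Sum>j\<in>{1..m}. int (l j) * (a j $ i))"
  shows "a 0 \<in> MA m a"
proof -
  have l0: "real (l 0) > 0" using lpos by auto
  have "rvec (a 0) = (\<Sum>j\<in>{1..m}. (real (l j) / real (l 0)) *\<^sub>R rvec (a j))"
  proof -
   have "\<forall>i. real_of_int (a 0 $ i) = (\<Sum>j\<in>{1..m}. real (l j) * real_of_int (a j $ i) / real (l 0))"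
   proof
    fix i
    have "real_of_int (int (l 0) * (a 0 $ i)) = real_of_int (\<Sum>j\<in>{1..m}. int (l j) * (a j $ i))"
      using rel by metis
    then have "real (l 0) * real_of_int (a 0 $ i) = (\<Sum>j\<in>{1..m}. real (l j) * real_of_int (a j $ i))"
      by simp
    then show "real_of_int (a 0 $ i) = (\<Sum>j\<in>{1..m}. real (l j) * real_of_int (a j $ i) / real (l 0))"
      using l0 by (simp add: sum_divide_distrib[symmetric] field_simps)
   qed
   then show ?thesis by (simp add: vec_eq_iff rvec_def)
  qed
  then show ?thesis unfolding MA_iff CA_def
    by (intro CollectI exI[of _ "\<lambda>j. real (l j) / real (l 0)"] conjI) auto
qed

lemma pairing_superset:
  assumes "module act" "finite F" "{u. s u \<noteq> 0} \<subseteq> F"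
  shows "pairing act xi s = (\<Sum>u\<in>F. act (s u) (xi u))"
proof -
  interpret module act by fact
  show ?thesis unfolding pairing_def
    by (rule sum.mono_neutral_left) (use assms in auto)
qed

lemma shift_sum:
  fixes s :: "int ^ 'n \<Rightarrow> complex poly"
  assumes "module act" "finite F" "finite G" "{u. s u \<noteq> 0} \<subseteq> F" "(\<lambda>u. u + b) ` F \<subseteq> G"
  shows "(\<Sum>w\<in>G. act (c * s (w - b)) (xi w)) = (\<Sum>u\<in>F. act (c * s u) (xi (u + b)))"
proof -
  interpret module act by fact
  have "(\<Sum>w\<in>G. act (c * s (w - b)) (xi w)) = (\<Sum>w\<in>(\<lambda>u. u + b) ` F. act (c * s (w - b)) (xi w))"
  proof (rule sum.mono_neutral_right)
    show "\<forall>i\<in>G - (\<lambda>u. u + b) ` F. act (c * s (i - b)) (xi i) = 0"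
    proof
      fix w assume w: "w \<in> G - (\<lambda>u. u + b) ` F"
      have "w - b \<notin> F"
      proof
        assume "w - b \<in> F"
        then have "(w - b) + b \<in> (\<lambda>u. u + b) ` F" by blast
        then show False using w by simp
      qed
      then have "s (w - b) = 0" using assms(4) by auto
      then show "act (c * s (w - b)) (xi w) = 0" by simp
    qed
  qed (use assms in auto)
  also have "\<dots> = (\<Sum>u\<in>F. act (c * s u) (xi (u + b)))"
    by (subst sum.reindex) (auto simp: inj_on_def)
  finally show ?thesis .
qed

lemma pair_delta:
  assumes "module act"
  shows "pairing act xi (dlt u) = xi u"
proof -
  interpret module act by fact
  have "{v. dlt u v \<noteq> 0} = {u}" by (auto simp: dlt_def)
  then show ?thesis unfolding pairing_def by (simp add: dlt_def)
qed

lemma pair_Dop: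
  fixes s :: "int ^ 'n \<Rightarrow> complex poly"
  assumes md: "module act" and fin: "finite {u. s u \<noteq> 0}"
  shows "pairing act xi (Dop m a l i s) = (\<Sum>u\<in>{u. s u \<noteq> 0}. act (s u) (Dstar m a l act i xi u))"
proof -
  interpret module act by fact
  define F where "F = {u. s u \<noteq> 0}"
  define G where "G = F \<union> (\<Union>j\<in>{0..m}. (\<lambda>u. u + a j) ` F)"
  have fF: "finite F" using fin F_def by simp
  have fG: "finite G" unfolding G_def using fF by auto
  have imG: "(\<lambda>u. u + a j) ` F \<subseteq> G" if "j \<in> {0..m}" for j
    unfolding G_def using that by blast
  have sF: "{u. s u \<noteq> 0} \<subseteq> F" by (simp add: F_def)
  have suppG: "{w. Dop m a l i s w \<noteq> 0} \<subseteq> G"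
  proof
    fix w assume w: "w \<in> {w. Dop m a l i s w \<noteq> 0}"
    show "w \<in> G"
    proof (rule ccontr)
      assume nG: "w \<notin> G"
      have z: "s (w - a j) = 0" if "j \<in> {0..m}" for j
      proof (rule ccontr)
        assume "s (w - a j) \<noteq> 0"
        then have "w - a j \<in> F" by (simp add: F_def)
        then have "(w - a j) + a j \<in> G" using imG[OF that] by blast
        then show False using nG by simp
      qed
      have z0: "s w = 0" using nG unfolding G_def F_def by auto
      have "Dop m a l i s w = 0" unfolding Dop_def using z z0 by simp
      then show False using w by simp
    qed
  qed
  let ?c = "\<lambda>j. (of_int (int (l j) * (a j $ i)) :: complex poly)"
  have "pairing act xi (Dop m a l i s) = (\<Sum>w\<in>G. act (Dop m a l i s w) (xi w))"
    by (rule pairing_superset[OF md fG suppG])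
  also have "\<dots> = (\<Sum>w\<in>G. act (of_int (w $ i) * s w) (xi w))
      + (\<Sum>j\<in>{1..m}. \<Sum>w\<in>G. act (?c j * s (w - a j)) (xi w))
      - (\<Sum>w\<in>G. act ((?c 0 * lam) * s (w - a 0)) (xi w))"
    unfolding Dop_def
    by (simp only: scale_left_distrib scale_left_diff_distrib scale_sum_left sum.distrib
        sum_subtractf sum.swap[of _ "{1..m}"])
  also have "\<dots> = (\<Sum>u\<in>F. act (of_int (u $ i) * s u) (xi u))
      + (\<Sum>j\<in>{1..m}. \<Sum>u\<in>F. act (?c j * s u) (xi (u + a j)))
      - (\<Sum>u\<in>F. act ((?c 0 * lam) * s u) (xi (u + a 0)))"
  proof -
    have 1: "(\<Sum>w\<in>G. act (of_int (w $ i) * s w) (xi w)) = (\<Sum>u\<in>F. act (of_int (u $ i) * s u) (xi u))"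
      by (rule sum.mono_neutral_right) (use fG imG[of 0] in \<open>auto simp: F_def G_def\<close>)
    have 2: "(\<Sum>w\<in>G. act (?c j * s (w - a j)) (xi w)) = (\<Sum>u\<in>F. act (?c j * s u) (xi (u + a j)))"
      if "j \<in> {1..m}" for j
      by (rule shift_sum[OF md fF fG sF imG]) (use that in auto)
    have 3: "(\<Sum>w\<in>G. act ((?c 0 * lam) * s (w - a 0)) (xi w)) = (\<Sum>u\<in>F. act ((?c 0 * lam) * s u) (xi (u + a 0)))"
      by (rule shift_sum[OF md fF fG sF imG]) auto
    show ?thesis using 1 2 3 by simp
  qed
  also have "\<dots> = (\<Sum>u\<in>F. act (s u) (Dstar m a l act i xi u))"
    unfolding Dstar_def
    apply (simp add: scale_right_distrib scale_right_diff_distrib scale_sum_right sum.distrib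
        sum_subtractf mult.commute)
    by (rule sum.swap)
  finally show ?thesis by (simp add: F_def)
qed

lemma pair_Dlam:
  fixes s :: "int ^ 'n \<Rightarrow> complex poly"
  assumes md: "module act" and fin: "finite {u. s u \<noteq> 0}"
  shows "pairing act xi (Dlam a l s) = (\<Sum>u\<in>{u. s u \<noteq> 0}. act (pderiv (s u)) (xi u) - act (of_nat (l 0) * s u) (xi (u + a 0)))"
proof -
  interpret module act by fact
  define F where "F = {u. s u \<noteq> 0}"
  define G where "G = F \<union> (\<lambda>u. u + a 0) ` F"
  have fF: "finite F" using fin F_def by simp
  have fG: "finite G" unfolding G_def using fF by auto
  have imG: "(\<lambda>u. u + a 0) ` F \<subseteq> G" unfolding G_def by blast
  have sF: "{u. s u \<noteq> 0} \<subseteq> F" by (simp add: F_def)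
  have suppG: "{w. Dlam a l s w \<noteq> 0} \<subseteq> G"
  proof
    fix w assume w: "w \<in> {w. Dlam a l s w \<noteq> 0}"
    show "w \<in> G"
    proof (rule ccontr)
      assume nG: "w \<notin> G"
      have z: "s (w - a 0) = 0"
      proof (rule ccontr)
        assume "s (w - a 0) \<noteq> 0"
        then have "w - a 0 \<in> F" by (simp add: F_def)
        then have "(w - a 0) + a 0 \<in> G" using imG by blast
        then show False using nG by simp
      qed
      have z0: "s w = 0" using nG unfolding G_def F_def by auto
      have "Dlam a l s w = 0" unfolding Dlam_def using z z0 by simp
      then show False using w by simp
    qed
  qed
  have "pairing act xi (Dlam a l s) = (\<Sum>w\<in>G. act (Dlam a l s w) (xi w))"
    by (rule pairing_superset[OF md fG suppG])
  also have "\<dots> = (\<Sum>w\<in>G. act (pderiv (s w)) (xi w)) - (\<Sum>w\<in>G. act (of_nat (l 0) * s (w - a 0)) (xi w))"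
    unfolding Dlam_def by (simp only: scale_left_diff_distrib sum_subtractf)
  also have "\<dots> = (\<Sum>u\<in>F. act (pderiv (s u)) (xi u)) - (\<Sum>u\<in>F. act (of_nat (l 0) * s u) (xi (u + a 0)))"
  proof -
    have 1: "(\<Sum>w\<in>G. act (pderiv (s w)) (xi w)) = (\<Sum>u\<in>F. act (pderiv (s u)) (xi u))"
      by (rule sum.mono_neutral_right) (use fG in \<open>auto simp: F_def G_def\<close>)
    have 3: "(\<Sum>w\<in>G. act (of_nat (l 0) * s (w - a 0)) (xi w)) = (\<Sum>u\<in>F. act (of_nat (l 0) * s u) (xi (u + a 0)))"
      by (rule shift_sum[OF md fF fG sF imG])
    show ?thesis using 1 3 by simp
  qed
  finally show ?thesis by (simp add: F_def sum_subtractf)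
qed

lemma supp_Dop:
  fixes s :: "int ^ 'n \<Rightarrow> complex poly"
  shows "{w. Dop m a l i s w \<noteq> 0} \<subseteq> {u. s u \<noteq> 0} \<union> (\<Union>j\<in>{0..m}. (\<lambda>u. u + a j) ` {u. s u \<noteq> 0})"
proof
  fix w assume w: "w \<in> {w. Dop m a l i s w \<noteq> 0}"
  show "w \<in> {u. s u \<noteq> 0} \<union> (\<Union>j\<in>{0..m}. (\<lambda>u. u + a j) ` {u. s u \<noteq> 0})"
  proof (rule ccontr)
    assume nG: "\<not> ?thesis"
    have z: "s (w - a j) = 0" if "j \<in> {0..m}" for j
    proof (rule ccontr)
      assume "s (w - a j) \<noteq> 0"
      then have "(w - a j) + a j \<in> (\<lambda>u. u + a j) ` {u. s u \<noteq> 0}" by blast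
      then show False using nG that by auto
    qed
    have z0: "s w = 0" using nG by auto
    have "Dop m a l i s w = 0" unfolding Dop_def using z z0 by simp
    then show False using w by simp
  qed
qed

lemma supp_Dlam:
  fixes s :: "int ^ 'n \<Rightarrow> complex poly"
  shows "{w. Dlam a l s w \<noteq> 0} \<subseteq> {u. s u \<noteq> 0} \<union> (\<lambda>u. u + a 0) ` {u. s u \<noteq> 0}"
proof
  fix w assume w: "w \<in> {w. Dlam a l s w \<noteq> 0}"
  show "w \<in> {u. s u \<noteq> 0} \<union> (\<lambda>u. u + a 0) ` {u. s u \<noteq> 0}"
  proof (rule ccontr)
    assume nG: "\<not> ?thesis"
    have z: "s (w - a 0) = 0"
    proof (rule ccontr)
      assume "s (w - a 0) \<noteq> 0"
      then have "(w - a 0) + a 0 \<in> (\<lambda>u. u + a 0) ` {u. s u \<noteq> 0}" by blast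
      then show False using nG by auto
    qed
    have z0: "s w = 0" using nG by auto
    have "Dlam a l s w = 0" unfolding Dlam_def using z z0 by simp
    then show False using w by simp
  qed
qed

lemma Dop_SA:
  fixes s :: "int ^ 'n \<Rightarrow> complex poly"
  assumes aM: "\<forall>j\<in>{0..m}. a j \<in> MA m a" and s: "s \<in> SA m a"
  shows "Dop m a l i s \<in> SA m a"
proof -
  have fin: "finite {u. s u \<noteq> 0}" and sM: "\<And>u. s u \<noteq> 0 \<Longrightarrow> u \<in> MA m a"
    using s by (auto simp: SA_def)
  have "finite {w. Dop m a l i s w \<noteq> 0}"
    by (rule finite_subset[OF supp_Dop]) (use fin in auto)
  moreover have "w \<in> MA m a" if "Dop m a l i s w \<noteq> 0" for w
  proof -
    have "w \<in> {u. s u \<noteq> 0} \<union> (\<Union>j\<in>{0..m}. (\<lambda>u. u + a j) ` {u. s u \<noteq> 0})"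
      using supp_Dop that by blast
    then show ?thesis using sM aM by (auto intro!: MA_add)
  qed
  ultimately show ?thesis unfolding SA_def by blast
qed

lemma Dlam_SA:
  fixes s :: "int ^ 'n \<Rightarrow> complex poly"
  assumes aM: "a 0 \<in> MA m a" and s: "s \<in> SA m a"
  shows "Dlam a l s \<in> SA m a"
proof -
  have fin: "finite {u. s u \<noteq> 0}" and sM: "\<And>u. s u \<noteq> 0 \<Longrightarrow> u \<in> MA m a"
    using s by (auto simp: SA_def)
  have "finite {w. Dlam a l s w \<noteq> 0}"
    by (rule finite_subset[OF supp_Dlam]) (use fin in auto)
  moreover have "w \<in> MA m a" if "Dlam a l s w \<noteq> 0" for w
  proof -
    have "w \<in> {u. s u \<noteq> 0} \<union> (\<lambda>u. u + a 0) ` {u. s u \<noteq> 0}"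
      using supp_Dlam that by blast
    then show ?thesis using sM aM by (auto intro!: MA_add)
  qed
  ultimately show ?thesis unfolding SA_def by blast
qed

lemma dlt_SA: "u \<in> MA m a \<Longrightarrow> dlt u \<in> SA m a"
proof -
  assume u: "u \<in> MA m a"
  have "{v. dlt u v \<noteq> 0} = {u}" by (auto simp: dlt_def)
  then show ?thesis using u unfolding SA_def by auto
qed

lemma phi_zero:
  assumes "HomDW m a l act P phi"
  shows "phi (\<lambda>v. 0) = 0"
proof -
  have z: "(\<lambda>v. 0 :: complex poly) \<in> SA m a" by (simp add: SA_def)
  have "\<forall>s\<in>SA m a. \<forall>t\<in>SA m a. phi (\<lambda>v. s v + t v) = phi s + phi t"
    using assms unfolding HomDW_def by blast
  from this[rule_format, OF z z] have "phi (\<lambda>v. 0 + 0) = phi (\<lambda>v. 0) + phi (\<lambda>v. 0)" .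
  then show ?thesis by simp
qed

lemma phi_rep:
  fixes s :: "int ^ 'n \<Rightarrow> complex poly"
  assumes H: "HomDW m a l act P phi" and s: "s \<in> SA m a"
  shows "phi s = (\<Sum>u\<in>{u. s u \<noteq> 0}. act (s u) (phi (dlt u)))"
proof -
  have fin: "finite {u. s u \<noteq> 0}" and sM: "\<And>u. s u \<noteq> 0 \<Longrightarrow> u \<in> MA m a"
    using s by (auto simp: SA_def)
  have add: "\<And>s t. s \<in> SA m a \<Longrightarrow> t \<in> SA m a \<Longrightarrow> phi (\<lambda>v. s v + t v) = phi s + phi t"
    and lin: "\<And>g s. s \<in> SA m a \<Longrightarrow> phi (\<lambda>v. g * s v) = act g (phi s)"
    using H unfolding HomDW_def by auto
  have gen: "F \<subseteq> {u. s u \<noteq> 0} \<Longrightarrow>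
      (\<lambda>v. \<Sum>u\<in>F. s u * dlt u v) \<in> SA m a \<and>
      phi (\<lambda>v. \<Sum>u\<in>F. s u * dlt u v) = (\<Sum>u\<in>F. act (s u) (phi (dlt u)))" for F
  proof (induction F rule: infinite_finite_induct)
    case (infinite F)
    then have False using finite_subset fin by blast
    then show ?case ..
  next
    case empty
    then show ?case using phi_zero[OF H] by (simp add: SA_def)
  next
    case (insert x F)
    have xM: "x \<in> MA m a" using insert sM by auto
    have IH: "(\<lambda>v. \<Sum>u\<in>F. s u * dlt u v) \<in> SA m a"
      "phi (\<lambda>v. \<Sum>u\<in>F. s u * dlt u v) = (\<Sum>u\<in>F. act (s u) (phi (dlt u)))"
      using insert by auto
    have dx: "(\<lambda>v. s x * dlt x v) \<in> SA m a"
      using xM unfolding SA_def dlt_def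
      by (auto intro: finite_subset[of _ "{x}"])
    have eq: "(\<lambda>v. \<Sum>u\<in>insert x F. s u * dlt u v) = (\<lambda>v. s x * dlt x v + (\<Sum>u\<in>F. s u * dlt u v))"
      using insert by simp
    have inSA: "(\<lambda>v. \<Sum>u\<in>insert x F. s u * dlt u v) \<in> SA m a"
    proof -
      have "{v. (\<Sum>u\<in>insert x F. s u * dlt u v) \<noteq> 0} \<subseteq> insert x F"
      proof
        fix v assume "v \<in> {v. (\<Sum>u\<in>insert x F. s u * dlt u v) \<noteq> 0}"
        then obtain u where "u \<in> insert x F" "s u * dlt u v \<noteq> 0"
          by (metis (mono_tags, lifting) mem_Collect_eq sum.neutral)
        then show "v \<in> insert x F" by (auto simp: dlt_def split: if_splits)
      qed
      moreover have "insert x F \<subseteq> MA m a" using insert sM by auto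
      ultimately show ?thesis unfolding SA_def using insert.hyps(1)
        by (auto intro: finite_subset)
    qed
    have "phi (\<lambda>v. \<Sum>u\<in>insert x F. s u * dlt u v) = phi (\<lambda>v. s x * dlt x v) + phi (\<lambda>v. \<Sum>u\<in>F. s u * dlt u v)"
      unfolding eq by (rule add[OF dx IH(1)])
    also have "\<dots> = act (s x) (phi (dlt x)) + (\<Sum>u\<in>F. act (s u) (phi (dlt u)))"
      using lin[OF dlt_SA[OF xM], of "s x"] IH(2) by (simp add: dlt_def)
    finally show ?case using inSA insert by simp
  qed
  have "(\<lambda>v. \<Sum>u\<in>{u. s u \<noteq> 0}. s u * dlt u v) = s"
  proof
    fix v
    have "(\<Sum>u\<in>{u. s u \<noteq> 0}. s u * dlt u v) = (\<Sum>u\<in>{u. s u \<noteq> 0}. if u = v then s v else 0)"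
      by (rule sum.cong) (auto simp: dlt_def)
    also have "\<dots> = s v" using fin by (simp add: sum.delta')
    finally show "(\<Sum>u\<in>{u. s u \<noteq> 0}. s u * dlt u v) = s v" .
  qed
  then show ?thesis using gen[of "{u. s u \<noteq> 0}"] by simp
qed

lemma supp_dlt: "{v. dlt u v \<noteq> 0} = {u}" by (auto simp: dlt_def)

lemma P_sum:
  assumes Padd: "\<forall>x y. P (x + y) = P x + P y"
  shows "P (sum f A) = (\<Sum>x\<in>A. P (f x :: 'f::ab_group_add) :: 'f)"
proof -
  have P0: "P 0 = 0"
  proof -
    have "P (0 + 0) = P 0 + P 0" using Padd by blast
    then show ?thesis by simp
  qed
  show ?thesis
    by (induction A rule: infinite_finite_induct) (auto simp: P0 Padd)
qed

theorem proposition2p6: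
  fixes m :: nat and a :: "nat \<Rightarrow> int ^ 'n" and l :: "nat \<Rightarrow> nat"
    and act :: "complex poly \<Rightarrow> 'f::ab_group_add \<Rightarrow> 'f" and P :: "'f \<Rightarrow> 'f"
  assumes indep: "\<And>c. (\<Sum>j\<in>{1..m}. c j *\<^sub>R rvec (a j)) = 0 \<Longrightarrow> \<forall>j\<in>{1..m}. c j = 0"
    and lpos: "\<forall>j\<in>{0..m}. 0 < l j"
    and lgcd: "Gcd (l ` {0..m}) = 1"
    and rel: "\<forall>i. int (l 0) * (a 0 $ i) = (\<Sum>j\<in>{1..m}. int (l j) * (a j $ i))"
    and lsum: "l 0 = (\<Sum>j\<in>{1..m}. l j)"
    and Dmod: "left_D_module act P"
  shows "(\<forall>xi\<in>KF m a l act P. HomDW m a l act P (pairing act xi))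
    \<and> (\<forall>phi. HomDW m a l act P phi \<longrightarrow>
          (\<exists>!xi. xi \<in> KF m a l act P \<and> (\<forall>s\<in>SA m a. pairing act xi s = phi s)))
    \<and> (\<forall>(xi :: int ^ 'n \<Rightarrow> 'f) eta. \<forall>s\<in>SA m a. pairing act (\<lambda>u. xi u + eta u) s = pairing act xi s + pairing act eta s)
    \<and> (\<forall>(xi :: int ^ 'n \<Rightarrow> 'f) g. \<forall>s\<in>SA m a. pairing act (\<lambda>u. act g (xi u)) s = act g (pairing act xi s))"
proof -
  have md: "module act" and Padd: "\<forall>x y. P (x + y) = P x + P y"
    and Pder: "\<And>g x. P (act g x) = act (pderiv g) x + act g (P x)"
    using Dmod unfolding left_D_module_def by auto
  interpret module act by (rule md)
  have a0M: "a 0 \<in> MA m a" by (rule a0_MA[OF lpos rel])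
  have aM: "\<forall>j\<in>{0..m}. a j \<in> MA m a"
  proof
    fix j assume "j \<in> {0..m}"
    then show "a j \<in> MA m a" using a0M aj_MA[of j m a] by (cases "j = 0") auto
  qed
  have SAfin: "finite {u. s u \<noteq> 0}" and SAM: "\<And>u. s u \<noteq> 0 \<Longrightarrow> u \<in> MA m a"
    if "s \<in> SA m a" for s :: "int ^ 'n \<Rightarrow> complex poly"
    using that by (auto simp: SA_def)
  have part1: "HomDW m a l act P (pairing act xi)" if xi: "xi \<in> KF m a l act P" for xi
  proof -
    have xiP: "\<And>u. u \<in> MA m a \<Longrightarrow> P (xi u) = - act (of_nat (l 0)) (xi (u + a 0))"
      and xiD: "\<And>i v. v \<in> MA m a \<Longrightarrow> Dstar m a l act i xi v = 0"
      using xi unfolding KF_def by auto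
    have A: "pairing act xi (\<lambda>v. s v + t v) = pairing act xi s + pairing act xi t"
      if s: "s \<in> SA m a" and t: "t \<in> SA m a" for s t
    proof -
      let ?F = "{u. s u \<noteq> 0} \<union> {u. t u \<noteq> 0}"
      have fF: "finite ?F" using SAfin[OF s] SAfin[OF t] by auto
      have "pairing act xi (\<lambda>v. s v + t v) = (\<Sum>u\<in>?F. act (s u + t u) (xi u))"
        by (rule pairing_superset[OF md fF]) auto
      also have "\<dots> = (\<Sum>u\<in>?F. act (s u) (xi u)) + (\<Sum>u\<in>?F. act (t u) (xi u))"
        by (simp add: scale_left_distrib sum.distrib)
      also have "\<dots> = pairing act xi s + pairing act xi t"
        using pairing_superset[OF md fF, of s xi] pairing_superset[OF md fF, of t xi] by auto
      finally show ?thesis .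
    qed
    have B: "pairing act xi (\<lambda>v. g * s v) = act g (pairing act xi s)"
      if s: "s \<in> SA m a" for g s
    proof -
      have "pairing act xi (\<lambda>v. g * s v) = (\<Sum>u\<in>{u. s u \<noteq> 0}. act (g * s u) (xi u))"
        by (rule pairing_superset[OF md SAfin[OF s]]) auto
      also have "\<dots> = act g (pairing act xi s)"
        unfolding pairing_def by (simp add: scale_sum_right)
      finally show ?thesis .
    qed
    have C: "pairing act xi (Dlam a l s) = P (pairing act xi s)" if s: "s \<in> SA m a" for s
    proof -
      have "P (pairing act xi s) = (\<Sum>u\<in>{u. s u \<noteq> 0}. P (act (s u) (xi u)))"
        unfolding pairing_def by (rule P_sum[OF Padd])
      also have "\<dots> = (\<Sum>u\<in>{u. s u \<noteq> 0}. act (pderiv (s u)) (xi u) - act (of_nat (l 0) * s u) (xi (u + a 0)))"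
      proof (rule sum.cong)
        fix u assume "u \<in> {u. s u \<noteq> 0}"
        then have "u \<in> MA m a" using SAM[OF s] by auto
        then show "P (act (s u) (xi u)) = act (pderiv (s u)) (xi u) - act (of_nat (l 0) * s u) (xi (u + a 0))"
          by (simp add: Pder xiP mult.commute)
      qed simp
      also have "\<dots> = pairing act xi (Dlam a l s)"
        by (rule pair_Dlam[OF md SAfin[OF s], symmetric])
      finally show ?thesis by simp
    qed
    have D: "pairing act xi (Dop m a l i s) = 0" if s: "s \<in> SA m a" for i s
    proof -
      have "pairing act xi (Dop m a l i s) = (\<Sum>u\<in>{u. s u \<noteq> 0}. act (s u) (Dstar m a l act i xi u))"
        by (rule pair_Dop[OF md SAfin[OF s]])
      also have "\<dots> = 0"
        by (rule sum.neutral) (auto simp: xiD SAM[OF s])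
      finally show ?thesis .
    qed
    show ?thesis unfolding HomDW_def using A B C D by blast
  qed
  have part2: "\<exists>!xi. xi \<in> KF m a l act P \<and> (\<forall>s\<in>SA m a. pairing act xi s = phi s)"
    if H: "HomDW m a l act P phi" for phi
  proof -
    have Hlam: "\<And>s. s \<in> SA m a \<Longrightarrow> phi (Dlam a l s) = P (phi s)"
      and Hop: "\<And>i s. s \<in> SA m a \<Longrightarrow> phi (Dop m a l i s) = 0"
      using H unfolding HomDW_def by auto
    define xi0 where "xi0 u = (if u \<in> MA m a then phi (dlt u) else 0)" for u
    have agree: "pairing act xi0 s = phi s" if s: "s \<in> SA m a" for s
    proof -
      have "pairing act xi0 s = (\<Sum>u\<in>{u. s u \<noteq> 0}. act (s u) (phi (dlt u)))"
        unfolding pairing_def by (rule sum.cong) (auto simp: xi0_def SAM[OF s])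
      also have "\<dots> = phi s" by (rule phi_rep[OF H s, symmetric])
      finally show ?thesis .
    qed
    have K: "xi0 \<in> KF m a l act P"
    proof -
      have "Dstar m a l act i xi0 v = 0" if v: "v \<in> MA m a" for i v
      proof -
        have "Dstar m a l act i xi0 v = pairing act xi0 (Dop m a l i (dlt v))"
          using pair_Dop[OF md, of "dlt v" xi0 m a l i] by (simp add: supp_dlt dlt_def)
        also have "\<dots> = phi (Dop m a l i (dlt v))"
          by (rule agree[OF Dop_SA[OF aM dlt_SA[OF v]]])
        also have "\<dots> = 0" by (rule Hop[OF dlt_SA[OF v]])
        finally show ?thesis .
      qed
      moreover have "P (xi0 u) = - act (of_nat (l 0)) (xi0 (u + a 0))" if u: "u \<in> MA m a" for u
      proof -
        have "P (xi0 u) = P (phi (dlt u))" using u by (simp add: xi0_def)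
        also have "\<dots> = phi (Dlam a l (dlt u))" by (rule Hlam[OF dlt_SA[OF u], symmetric])
        also have "\<dots> = pairing act xi0 (Dlam a l (dlt u))"
          by (rule agree[OF Dlam_SA[OF a0M dlt_SA[OF u]], symmetric])
        also have "\<dots> = - act (of_nat (l 0)) (xi0 (u + a 0))"
          using pair_Dlam[OF md, of "dlt u" xi0 a l] by (simp add: supp_dlt dlt_def)
        finally show ?thesis .
      qed
      ultimately show ?thesis unfolding KF_def by (auto simp: xi0_def)
    qed
    show ?thesis
    proof (rule ex1I[of _ xi0])
      show "xi0 \<in> KF m a l act P \<and> (\<forall>s\<in>SA m a. pairing act xi0 s = phi s)"
        using K agree by blast
    next
      fix xi assume xi: "xi \<in> KF m a l act P \<and> (\<forall>s\<in>SA m a. pairing act xi s = phi s)"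
      show "xi = xi0"
      proof
        fix u
        show "xi u = xi0 u"
        proof (cases "u \<in> MA m a")
          case True
          have "xi u = pairing act xi (dlt u)" by (rule pair_delta[OF md, symmetric])
          also have "\<dots> = phi (dlt u)" using xi dlt_SA[OF True] by blast
          finally show ?thesis using True by (simp add: xi0_def)
        next
          case False
          then show ?thesis using xi unfolding KF_def by (simp add: xi0_def)
        qed
      qed
    qed
  qed
  have part3: "pairing act (\<lambda>u. xi u + eta u) s = pairing act xi s + pairing act eta s" for xi eta s
    unfolding pairing_def by (simp add: scale_right_distrib sum.distrib)
  have part4: "pairing act (\<lambda>u. act g (xi u)) s = act g (pairing act xi s)" for xi g s
    unfolding pairing_def by (simp add: scale_sum_right mult.commute)
  show ?thesis using part1 part2 part3 part4 by blast
qed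

end
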